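(* Let $\Delta \ge 3$ and $q\ge 2$ be integers, let $\alpha = \frac{1}{1000 \log (q\Delta)}$ and $g_\alpha(k) = \sum_{i=0}^{k-1} q^{\alpha i} = \frac{q^{\alpha k}-1}{q^\alpha-1}$. Then $$\beta(\alpha) := \sum_{k=1}^{\Delta} \binom{\Delta}{k} \frac{(2\Delta-1)^{(\Delta-k)(1-\alpha)}}{(2\Delta)^{\Delta(1-\alpha)}}\, g_\alpha(k+1) < 1.$$
   Context: $\log$ denotes the natural logarithm. *)

theory Defs
  imports Complex_Main
begin

definition g_alpha :: "real \<Rightarrow> nat \<Rightarrow> nat \<Rightarrow> real" where
  "g_alpha \<alpha> q k = (\<Sum>i<k. (real q) powr (\<alpha> * real i))"

definition beta :: "nat \<Rightarrow> nat \<Rightarrow> real \<Rightarrow> real" where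
  "beta q \<Delta> \<alpha> = (\<Sum>k=1..\<Delta>. real (\<Delta> choose k) *
      ((2 * real \<Delta> - 1) powr (real (\<Delta> - k) * (1 - \<alpha>))
       / (2 * real \<Delta>) powr (real \<Delta> * (1 - \<alpha>)))
      * g_alpha \<alpha> q (k + 1))"

end

theory Submission
  imports Defs
begin
lemma binsum_k:
  fixes x r :: real
  shows "(\<Sum>k\<le>Suc m. real (Suc m choose k) * real k * x^(Suc m - k) * r^k)
         = real (Suc m) * r * (x + r)^m"
proof -
  have "(\<Sum>k\<le>Suc m. real (Suc m choose k) * real k * x^(Suc m - k) * r^k)
      = (\<Sum>j\<le>m. real (Suc m choose Suc j) * real (Suc j) * x^(m - j) * r^(Suc j))"
    by (subst sum.atMost_Suc_shift) simp
  also have "\<dots> = (\<Sum>j\<le>m. real (Suc m) * r * (real (m choose j) * r^j * x^(m - j)))"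
  proof (rule sum.cong[OF refl])
    fix j assume "j \<in> {..m}"
    have e: "real (Suc m choose Suc j) * real (Suc j) = real (Suc m) * real (m choose j)"
      using Suc_times_binomial[of j m] by (metis of_nat_mult mult.commute)
    show "real (Suc m choose Suc j) * real (Suc j) * x^(m - j) * r^(Suc j)
        = real (Suc m) * r * (real (m choose j) * r^j * x^(m - j))"
      using e by (simp add: algebra_simps)
  qed
  also have "\<dots> = real (Suc m) * r * (r + x)^m"
    by (simp add: binomial_ring sum_distrib_left)
  finally show ?thesis by (simp add: add.commute)
qed

lemma binsum_full:
  fixes x r :: real and n :: nat
  assumes "n \<ge> 1"
  shows "(\<Sum>k\<le>n. real (n choose k) * x^(n - k) * r^k * (real k + 1))
         = (x + r)^n + real n * r * (x + r)^(n - 1)"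
proof -
  obtain m where n: "n = Suc m" using assms by (cases n) auto
  have a: "(\<Sum>k\<le>n. real (n choose k) * x^(n - k) * r^k) = (x + r)^n"
    by (simp add: binomial_ring add.commute mult.commute mult.left_commute)
  have "(\<Sum>k\<le>n. real (n choose k) * x^(n - k) * r^k * (real k + 1))
     = (\<Sum>k\<le>n. real (n choose k) * real k * x^(n - k) * r^k) + (\<Sum>k\<le>n. real (n choose k) * x^(n - k) * r^k)"
    by (simp add: sum.distrib[symmetric] algebra_simps)
  then show ?thesis using a binsum_k[of m x r] n by simp
qed

lemma g_bound:
  assumes "a \<ge> 0" "q \<ge> 1"
  shows "g_alpha a q (k+1) \<le> (real k + 1) * real q powr (a * real k)"
proof -
  have "g_alpha a q (k+1) \<le> (\<Sum>i<k+1. real q powr (a * real k))"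
    unfolding g_alpha_def
    by (rule sum_mono, rule powr_mono) (use assms in \<open>auto intro: mult_left_mono\<close>)
  then show ?thesis by (simp add: add.commute)
qed

lemma ident:
  fixes x y qq a :: real
  assumes "x > 0" "y > 0" "qq > 0" "k \<le> n"
  shows "x powr (real (n-k)*(1-a)) / y powr (real n*(1-a)) * qq powr (a * real k)
     = (y/x) powr (real n * a) * (x^(n-k) * ((x*qq) powr a)^k) / y^n"
proof -
  have p1: "x^(n-k) = exp (real (n-k) * ln x)" using assms by (simp only: exp_of_nat_mult exp_ln)
  have p2: "y^n = exp (real n * ln y)" using assms by (simp add: exp_of_nat_mult)
  have p3: "((x*qq) powr a)^k = exp (real k * (a * (ln x + ln qq)))"
    using assms by (simp add: exp_of_nat_mult powr_def ln_mult)
  have l: "ln (y * inverse x) = ln y - ln x" using assms by (simp add: ln_div divide_inverse[symmetric])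
  show ?thesis
    unfolding p1 p2 p3 using assms
    apply (simp add: powr_def l of_nat_diff exp_add[symmetric] exp_diff[symmetric] divide_inverse exp_minus[symmetric])
    apply (simp add: algebra_simps)
    done
qed

lemma exp_small_upper:
  fixes t :: real assumes "0 \<le> t" "t < 1"
  shows "exp t \<le> 1 / (1 - t)"
proof -
  have "1 - t \<le> exp (-t)" using exp_ge_add_one_self[of "-t"] by simp
  then have "(1 - t) * exp t \<le> 1" by (simp add: exp_minus field_simps)
  then show ?thesis using assms by (simp add: field_simps)
qed

theorem proposition4p15:
  fixes q \<Delta> :: nat and \<alpha> :: real
  assumes "\<Delta> \<ge> 3" and "q \<ge> 2"
    and "\<alpha> = 1 / (1000 * ln (real q * real \<Delta>))"
  shows "beta q \<Delta> \<alpha> < 1"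
proof -
  define D where "D = real \<Delta>"
  define x where "x = 2 * D - 1"
  define y where "y = 2 * D"
  define L where "L = ln (real q * D)"
  define a where "a = \<alpha>"
  define r where "r = (x * real q) powr a"
  define E where "E = (y / x) powr (real \<Delta> * a)"
  have D3: "D \<ge> 3" using assms(1) unfolding D_def by simp
  have q2: "real q \<ge> 2" using assms(2) by simp
  have xpos: "x > 0" and ypos: "y > 0" using D3 unfolding x_def y_def by auto
  have qD6: "real q * D \<ge> 6" using mult_mono[OF q2 D3] by simp
  have L1: "L > 1"
  proof -
    have "exp 1 < real q * D" using exp_le qD6 by linarith
    then have "ln (exp 1) < ln (real q * D)" using qD6 by (subst ln_less_cancel_iff) auto
    then show ?thesis unfolding L_def by simp
  qed
  have aL: "a * L = 1/1000" unfolding a_def assms(3) L_def[symmetric] D_def[symmetric] using L1 by simp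
  have apos: "a > 0" unfolding a_def assms(3) L_def[symmetric] D_def[symmetric] using L1 by simp
  have asmall: "a < 1/1000" unfolding a_def assms(3) L_def[symmetric] D_def[symmetric] using L1
    by (simp add: field_simps)
  have lnyx: "ln (y / x) \<le> 1 / x"
    using ln_le_minus_one[of "y/x"] xpos ypos unfolding x_def y_def by (simp add: field_simps)
  have lnyx0: "ln (y / x) \<ge> 0" using xpos unfolding x_def y_def by simp
  have Dx: "D / x \<le> 3/5" using D3 unfolding x_def by (simp add: field_simps)
  have "real \<Delta> * a * ln (y / x) \<le> D * a * (1 / x)"
    using mult_left_mono[OF lnyx, of "D * a"] apos D3 unfolding D_def by simp
  also have "\<dots> = a * (D / x)" by simp
  also have "\<dots> \<le> a * 1" by (intro mult_left_mono; use Dx apos in linarith)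
  finally have Eexp: "real \<Delta> * a * ln (y / x) \<le> 1/1000" using asmall by simp
  have E_le: "E \<le> 1000/999"
  proof -
    have "E = exp (real \<Delta> * a * ln (y / x))" unfolding E_def powr_def using xpos ypos by simp
    also have "\<dots> \<le> exp (1/1000)" using Eexp by simp
    also have "\<dots> \<le> 1000/999" using exp_small_upper[of "1/1000"] by simp
    finally show ?thesis .
  qed
  have E_pos: "E > 0" unfolding E_def using xpos ypos by simp
  have xq_pos: "x * real q > 0" using xpos q2 by simp
  have xq_le: "x * real q \<le> (real q * D)^2"
  proof -
    have "2 * D \<le> real q * D" using mult_right_mono[OF q2, of D] D3 by simp
    then have "x \<le> real q * D" unfolding x_def by simp
    moreover have "real q * 1 \<le> real q * D" using q2 D3 by (intro mult_left_mono) auto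
    ultimately show ?thesis unfolding power2_eq_square using xpos q2
      by (intro mult_mono) auto
  qed
  have r_exp: "r = exp (a * ln (x * real q))" unfolding r_def powr_def using xq_pos xpos q2 by simp
  have lnxq: "ln (x * real q) \<le> 2 * L"
  proof -
    have "ln (x * real q) \<le> ln ((real q * D)^2)" by (rule ln_mono[OF xq_le xq_pos])
    also have "\<dots> = 2 * L" unfolding L_def using qD6 by (simp add: ln_realpow)
    finally show ?thesis .
  qed
  have "a * ln (x * real q) \<le> 1/500"
  proof -
    have "a * ln (x * real q) \<le> a * (2 * L)" using lnxq apos by (intro mult_left_mono) auto
    then show ?thesis using aL by simp
  qed
  then have "r \<le> exp (1/500)" unfolding r_exp by simp
  then have r_le: "r \<le> 500/499" using exp_small_upper[of "1/500"] by simp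
  have r_ge: "r \<ge> 1"
  proof -
    have "x * real q \<ge> 1 * 1" using D3 q2 unfolding x_def by (intro mult_mono) auto
    then have "ln (x * real q) \<ge> 0" by simp
    then show ?thesis unfolding r_exp using apos by simp
  qed
  define T where "T k = real (\<Delta> choose k) * (x^(\<Delta>-k) * r^k * (real k + 1))" for k
  have termb: "real (\<Delta> choose k) *
      ((2 * real \<Delta> - 1) powr (real (\<Delta> - k) * (1 - \<alpha>))
       / (2 * real \<Delta>) powr (real \<Delta> * (1 - \<alpha>)))
      * g_alpha \<alpha> q (k + 1) \<le> E * T k / y^\<Delta>" if k: "k \<le> \<Delta>" for k
  proof -
    let ?P = "x powr (real (\<Delta> - k) * (1 - a)) / y powr (real \<Delta> * (1 - a))"
    have P0: "?P \<ge> 0" by simp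
    have "?P * g_alpha a q (k + 1) \<le> ?P * ((real k + 1) * real q powr (a * real k))"
      using g_bound[of a q k] apos q2 P0 by (intro mult_left_mono) auto
    also have "\<dots> = (real k + 1) * (?P * real q powr (a * real k))" by simp
    also have "?P * real q powr (a * real k) = E * (x^(\<Delta>-k) * r^k) / y^\<Delta>"
      unfolding E_def r_def using ident[OF xpos ypos _ k, of "real q" a] q2 by simp
    finally have "?P * g_alpha a q (k + 1) \<le> (real k + 1) * (E * (x^(\<Delta>-k) * r^k) / y^\<Delta>)" .
    then have "real (\<Delta> choose k) * (?P * g_alpha a q (k + 1)) \<le>
        real (\<Delta> choose k) * ((real k + 1) * (E * (x^(\<Delta>-k) * r^k) / y^\<Delta>))"
      by (rule mult_left_mono) simp
    then show ?thesis unfolding T_def x_def y_def D_def a_def by (simp add: algebra_simps)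
  qed
  have "beta q \<Delta> \<alpha> \<le> (\<Sum>k=1..\<Delta>. E * T k / y^\<Delta>)"
    unfolding beta_def by (rule sum_mono) (use termb in auto)
  also have "\<dots> = E / y^\<Delta> * (\<Sum>k=1..\<Delta>. T k)" by (simp add: sum_distrib_left)
  also have "(\<Sum>k=1..\<Delta>. T k) = (\<Sum>k\<le>\<Delta>. T k) - x^\<Delta>"
  proof -
    have "{..\<Delta>} = insert 0 {1..\<Delta>}" by auto
    then have "(\<Sum>k\<le>\<Delta>. T k) = T 0 + (\<Sum>k=1..\<Delta>. T k)" by simp
    then show ?thesis unfolding T_def by simp
  qed
  also have "(\<Sum>k\<le>\<Delta>. T k) = (x + r)^\<Delta> + D * r * (x + r)^(\<Delta> - 1)"
    unfolding T_def D_def using binsum_full[of \<Delta> x r] assms(1) by (simp add: mult.assoc)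
  finally have b1: "beta q \<Delta> \<alpha> \<le> E / y^\<Delta> * ((x + r)^\<Delta> + D * r * (x + r)^(\<Delta> - 1) - x^\<Delta>)" .
  have split: "(x + r)^\<Delta> = (x + r)^(\<Delta> - 1) * (x + r)"
    using assms(1) by (metis One_nat_def Suc_pred less_le_trans mult.commute numeral_3_eq_3 power_Suc zero_less_Suc)
  have b2: "E / y^\<Delta> * ((x + r)^\<Delta> + D * r * (x + r)^(\<Delta> - 1) - x^\<Delta>)
      = E * (((x + r)/y)^(\<Delta> - 1) * ((x + r + D * r) / y) - (x/y)^\<Delta>)"
  proof -
    have yy: "y^\<Delta> = y^(\<Delta>-1) * y" using split assms(1)
      by (metis One_nat_def Suc_pred less_le_trans mult.commute numeral_3_eq_3 power_Suc zero_less_Suc)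
    show ?thesis unfolding split using ypos
      by (simp add: yy power_divide field_simps)
  qed
  have B1: "((x + r)/y)^(\<Delta> - 1) \<le> 998/997"
  proof -
    have "(x + r)/y = 1 + (r - 1)/y" using ypos unfolding x_def y_def by (simp add: field_simps)
    also have "\<dots> \<le> exp ((r - 1)/y)" by simp
    finally have "((x + r)/y)^(\<Delta> - 1) \<le> exp ((r - 1)/y)^(\<Delta> - 1)"
      using xpos r_ge ypos by (intro power_mono) auto
    also have "\<dots> = exp (real (\<Delta> - 1) * ((r - 1)/y))" by (rule exp_of_nat_mult[symmetric])
    also have "real (\<Delta> - 1) * ((r - 1)/y) \<le> 1/998"
    proof -
      have "real (\<Delta> - 1) / y \<le> 1/2" using assms(1) unfolding y_def D_def by (simp add: of_nat_diff field_simps)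
      moreover have "r - 1 \<le> 1/499" using r_le by simp
      ultimately have "(real (\<Delta> - 1) / y) * (r - 1) \<le> (1/2) * (1/499)"
        using r_ge ypos by (intro mult_mono) auto
      then show ?thesis by simp
    qed
    then have "exp (real (\<Delta> - 1) * ((r - 1)/y)) \<le> exp (1/998)" by simp
    also have "\<dots> \<le> 998/997" using exp_small_upper[of "1/998"] by simp
    finally show ?thesis .
  qed
  have B2: "(x + r + D * r) / y \<le> 1502/1000"
  proof -
    have "r * (D + 1) \<le> 500/499 * (D + 1)" using r_le D3 by (intro mult_right_mono) auto
    then show ?thesis using ypos D3 unfolding x_def y_def by (simp add: field_simps)
  qed
  have B3: "(x/y)^\<Delta> \<ge> (99/100)^60"
  proof -
    have "ln (x/y) \<ge> - (1 / x)"
    proof -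
      have "ln (y/x) \<le> 1/x" by (rule lnyx)
      moreover have "ln (x/y) = - ln (y/x)" using xpos ypos by (simp add: ln_div)
      ultimately show ?thesis by simp
    qed
    then have "D * ln (x/y) \<ge> D * (- (1/x))" using D3 by (intro mult_left_mono) auto
    moreover have "D * (1/x) \<le> 3/5" using Dx by simp
    ultimately have h: "D * ln (x/y) \<ge> -(3/5)" by simp
    have "(x/y)^\<Delta> = exp (D * ln (x/y))" unfolding D_def using xpos ypos
      by (simp add: exp_of_nat_mult)
    also have "\<dots> \<ge> exp (-(3/5))" using h by simp
    finally have "(x/y)^\<Delta> \<ge> exp (-(1/100)) ^ 60" by (simp add: exp_of_nat_mult[symmetric])
    moreover have "exp (-(1/100)) ^ 60 \<ge> (99/100::real)^60"
      using exp_ge_add_one_self[of "-(1/100)"] by (intro power_mono) auto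
    ultimately show ?thesis by linarith
  qed
  have a1: "(99/100::real)^10 \<ge> 904/1000" by (simp add: power_divide)
  have a2: "(904/1000::real)^6 \<ge> 545/1000" by (simp add: power_divide)
  have "(99/100::real)^60 = ((99/100)^10)^6" by (simp add: power_mult[symmetric])
  also have "\<dots> \<ge> (904/1000)^6" using a1 by (intro power_mono) auto
  finally have a3: "(99/100::real)^60 \<ge> 545/1000" using a2 by linarith
  have num: "(998/997) * (1502/1000) - (545/1000::real) < 999/1000" by simp
  have B: "((x + r)/y)^(\<Delta> - 1) * ((x + r + D * r) / y) - (x/y)^\<Delta> < 999/1000"
  proof -
    have "((x + r)/y)^(\<Delta> - 1) * ((x + r + D * r) / y) \<le> (998/997) * (1502/1000)"
      using B1 B2 xpos ypos r_ge D3 by (intro mult_mono) auto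
    then show ?thesis using B3 a3 num by linarith
  qed
  show ?thesis
  proof (cases "((x + r)/y)^(\<Delta> - 1) * ((x + r + D * r) / y) - (x/y)^\<Delta> \<le> 0")
    case True
    then have "E * (((x + r)/y)^(\<Delta> - 1) * ((x + r + D * r) / y) - (x/y)^\<Delta>) \<le> 0"
      using E_pos by (simp add: mult_nonneg_nonpos)
    then show ?thesis using b1 b2 by linarith
  next
    case False
    let ?B = "((x + r)/y)^(\<Delta> - 1) * ((x + r + D * r) / y) - (x/y)^\<Delta>"
    have "E * ?B \<le> 1000/999 * ?B" using E_le False by (intro mult_right_mono) auto
    also have "\<dots> < 1000/999 * (999/1000)" using B by (intro mult_strict_left_mono) auto
    finally have "E * ?B < 1" by simp
    then show ?thesis using b1 b2 by linarith
  qed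
qed

end
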